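(* Let $P_{II*}=P_{II}$. For a filter $\Xi\in P_{III*}$, $\mathcal C_{\Xi\text{-unc}}\neq\emptyset$ if and only if there exists a partition $\xi\in P_I$ such that $\Xi=\uparrow\{\downarrow\{\xi\}\}$, i.e. $\Xi=\{\boldsymbol\xi\in P_{II}:\xi\in\boldsymbol\xi\}$, where $\downarrow\{\xi\}=\{\upsilon\in P_I:\upsilon\preceq\xi\}$ and $\uparrow\{\boldsymbol\zeta\}=\{\boldsymbol\upsilon\in P_{II}:\boldsymbol\zeta\subseteq\boldsymbol\upsilon\}$.
   Context: Let $n\ge1$, $L=\{1,\dots,n\}$, and for $i\in L$ let $\mathcal H_i$ be a Hilbert space with $1<\dim\mathcal H_i<\infty$; $\mathcal H_X=\bigotimes_{i\in X}\mathcal H_i$ and $\mathcal D_X$ is the set of density operators on $\mathcal H_X$. $P_I$ is the set of partitions of $L$ ordered by refinement ($\upsilon\preceq\xi$ iff every part of $\upsilon$ lies in a part of $\xi$). For $\xi\in P_I$, $\mathcal D_{\xi\text{-unc}}=\{\varrho\in\mathcal D_L:\varrho=\bigotimes_{X\in\xi}\varrho_X,\ \varrho_X\in\mathcal D_X\}$, and for $S\subseteq P_I$, $\mathcal D_{S\text{-unc}}=\bigcup_{\xi\in S}\mathcal D_{\xi\text{-unc}}$. $P_{II}$ is the set of nonempty down-sets of $P_I$, ordered by inclusion; $P_{III*}$ is the set of nonempty up-sets of $P_{II*}$. For $\Xi\in P_{III*}$: $\overline\Xi=P_{II*}\setminus\Xi$ and $\mathcal C_{\Xi\text{-unc}}=\bigcap_{\boldsymbol\xi'\in\overline\Xi}(\mathcal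 D_L\setminus\mathcal D_{\boldsymbol\xi'\text{-unc}})\cap\bigcap_{\boldsymbol\xi\in\Xi}\mathcal D_{\boldsymbol\xi\text{-unc}}$. *)

theory Defs
  imports Complex_Main "HOL-Library.Disjoint_Sets"
begin

text \<open>Each \<open>H_i\<close> is modelled as \<open>C^(d i)\<close> with a fixed orthonormal basis.
 A basis vector of \<open>H_X\<close> is a multi-index \<open>f\<close> with \<open>f i < d i\<close> for \<open>i \<in> X\<close>
 and \<open>f i = 0\<close> outside \<open>X\<close>. Operators on \<open>H_X\<close> are matrices indexed by such
 multi-indices (entries outside the index set are required to be 0).\<close>

definition configs :: "(nat \<Rightarrow> nat) \<Rightarrow> nat set \<Rightarrow> (nat \<Rightarrow> nat) set" where
  "configs d X = {f. (\<forall>i\<in>X. f i < d i) \<and> (\<forall>i. i \<notin> X \<longrightarrow> f i = 0)}"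

type_synonym op = "(nat \<Rightarrow> nat) \<Rightarrow> (nat \<Rightarrow> nat) \<Rightarrow> complex"

definition is_density :: "(nat \<Rightarrow> nat) \<Rightarrow> nat set \<Rightarrow> op \<Rightarrow> bool" where
  "is_density d X \<rho> \<longleftrightarrow>
     (\<forall>f g. (f \<notin> configs d X \<or> g \<notin> configs d X) \<longrightarrow> \<rho> f g = 0) \<and>
     (\<forall>f g. \<rho> f g = cnj (\<rho> g f)) \<and>
     (\<forall>v :: (nat \<Rightarrow> nat) \<Rightarrow> complex.
        let q = (\<Sum>f\<in>configs d X. \<Sum>g\<in>configs d X. cnj (v f) * \<rho> f g * v g)
        in Im q = 0 \<and> 0 \<le> Re q) \<and>
     (\<Sum>f\<in>configs d X. \<rho> f f) = 1"

definition dens :: "(nat \<Rightarrow> nat) \<Rightarrow> nat set \<Rightarrow> op set" where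
  "dens d X = {\<rho>. is_density d X \<rho>}"

definition restr :: "(nat \<Rightarrow> nat) \<Rightarrow> nat set \<Rightarrow> (nat \<Rightarrow> nat)" where
  "restr f X = (\<lambda>i. if i \<in> X then f i else 0)"

definition tensor :: "(nat \<Rightarrow> nat) \<Rightarrow> nat set \<Rightarrow> nat set set \<Rightarrow> (nat set \<Rightarrow> op) \<Rightarrow> op" where
  "tensor d L \<xi> \<rho>s = (\<lambda>f g. if f \<in> configs d L \<and> g \<in> configs d L
      then (\<Prod>X\<in>\<xi>. \<rho>s X (restr f X) (restr g X)) else 0)"

definition unc :: "(nat \<Rightarrow> nat) \<Rightarrow> nat set \<Rightarrow> nat set set \<Rightarrow> op set" where
  "unc d L \<xi> = {\<rho> \<in> dens d L. \<exists>\<rho>s. (\<forall>X\<in>\<xi>. \<rho>s X \<in> dens d X) \<and> \<rho> = tensor d L \<xi> \<rho>s}"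

definition uncS :: "(nat \<Rightarrow> nat) \<Rightarrow> nat set \<Rightarrow> nat set set set \<Rightarrow> op set" where
  "uncS d L S = (\<Union>\<xi>\<in>S. unc d L \<xi>)"

definition PI :: "nat set \<Rightarrow> nat set set set" where
  "PI L = {\<xi>. partition_on L \<xi>}"

definition refines :: "nat set set \<Rightarrow> nat set set \<Rightarrow> bool" where
  "refines \<upsilon> \<xi> \<longleftrightarrow> (\<forall>Y\<in>\<upsilon>. \<exists>X\<in>\<xi>. Y \<subseteq> X)"

definition PII :: "nat set \<Rightarrow> nat set set set set" where
  "PII L = {S. S \<subseteq> PI L \<and> S \<noteq> {} \<and> (\<forall>\<xi>\<in>S. \<forall>\<upsilon>\<in>PI L. refines \<upsilon> \<xi> \<longrightarrow> \<upsilon> \<in> S)}"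

definition PIII :: "nat set \<Rightarrow> nat set set set set set" where
  "PIII L = {\<Xi>. \<Xi> \<subseteq> PII L \<and> \<Xi> \<noteq> {} \<and> (\<forall>a\<in>\<Xi>. \<forall>b\<in>PII L. a \<subseteq> b \<longrightarrow> b \<in> \<Xi>)}"

definition Cunc :: "(nat \<Rightarrow> nat) \<Rightarrow> nat set \<Rightarrow> nat set set set set \<Rightarrow> op set" where
  "Cunc d L \<Xi> = (\<Inter>\<xi>'\<in>PII L - \<Xi>. dens d L - uncS d L \<xi>') \<inter> (\<Inter>\<xi>\<in>\<Xi>. uncS d L \<xi>)"

definition downset :: "nat set \<Rightarrow> nat set set \<Rightarrow> nat set set set" where
  "downset L \<xi> = {\<upsilon> \<in> PI L. refines \<upsilon> \<xi>}"

definition upset :: "nat set \<Rightarrow> nat set set set \<Rightarrow> nat set set set set" where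
  "upset L Z = {U \<in> PII L. Z \<subseteq> U}"

end

theory Submission
  imports Defs
begin

definition mg :: "nat set \<Rightarrow> (nat \<Rightarrow> nat) \<Rightarrow> (nat \<Rightarrow> nat) \<Rightarrow> (nat \<Rightarrow> nat)" where
  "mg A f c = (\<lambda>i. if i \<in> A then f i else c i)"

lemma configs_empty: "configs d {} = {\<lambda>i. 0}"
  by (auto simp: configs_def)

lemma finite_configs: "finite X \<Longrightarrow> finite (configs d X)"
proof (induction X rule: finite_induct)
  case empty then show ?case by (simp add: configs_empty)
next
  case (insert x X)
  have "configs d (insert x X) \<subseteq> (\<lambda>(f,v). f(x:=v)) ` (configs d X \<times> {..<d x})"
  proof
    fix f assume f: "f \<in> configs d (insert x X)"
    have "f = (\<lambda>(f,v). f(x:=v)) (f(x:=0), f x)" by auto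
    moreover have "(f(x:=0), f x) \<in> configs d X \<times> {..<d x}"
      using f insert.hyps by (auto simp: configs_def)
    ultimately show "f \<in> (\<lambda>(f,v). f(x:=v)) ` (configs d X \<times> {..<d x})" by blast
  qed
  then show ?case using insert.IH finite_subset by blast
qed

lemma restr_configs: "f \<in> configs d L \<Longrightarrow> Z \<subseteq> L \<Longrightarrow> restr f Z \<in> configs d Z"
  by (auto simp: configs_def restr_def)

lemma mg_configs: "f \<in> configs d L \<Longrightarrow> c \<in> configs d L \<Longrightarrow> mg A f c \<in> configs d L"
  by (auto simp: configs_def mg_def)

lemma mg_configs2: "h \<in> configs d Z \<Longrightarrow> Z \<subseteq> L \<Longrightarrow> c \<in> configs d L \<Longrightarrow> mg Z h c \<in> configs d L"
  by (auto simp: configs_def mg_def)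

lemma restr_mg_same: "h \<in> configs d Z \<Longrightarrow> restr (mg Z h c) Z = h"
  by (auto simp: configs_def mg_def restr_def)

lemma mg_restr: "mg Z (restr f Z) c = mg Z f c"
  by (auto simp: mg_def restr_def fun_eq_iff)

lemma restr_mg_disj: "Y \<inter> Z = {} \<Longrightarrow> restr (mg Z f c) Y = restr c Y"
  by (auto simp: mg_def restr_def fun_eq_iff)

lemma restr_mg_sub: "Y \<subseteq> Z \<Longrightarrow> restr (mg Z f c) Y = restr f Y"
  by (auto simp: mg_def restr_def fun_eq_iff)

lemma mg_full: "f \<in> configs d L \<Longrightarrow> c \<in> configs d L \<Longrightarrow> mg L f c = f"
  by (auto simp: configs_def mg_def)

lemma restr_restr: "restr (restr f Y) Z = restr f (Y \<inter> Z)"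
  by (auto simp: restr_def)

lemma sum_prod_configs:
  fixes F :: "nat set \<Rightarrow> (nat \<Rightarrow> nat) \<Rightarrow> 'a::comm_semiring_1"
  assumes "finite Q" "\<forall>Z\<in>Q. finite Z" "\<forall>Z\<in>Q. \<forall>Z'\<in>Q. Z \<noteq> Z' \<longrightarrow> Z \<inter> Z' = {}"
  shows "(\<Sum>f\<in>configs d (\<Union>Q). \<Prod>Z\<in>Q. F Z (restr f Z)) = (\<Prod>Z\<in>Q. \<Sum>h\<in>configs d Z. F Z h)"
  using assms
proof (induction Q rule: finite_induct)
  case empty then show ?case by (simp add: configs_empty)
next
  case (insert X Q)
  define M where "M = \<Union>Q"
  have disj: "X \<inter> M = {}"
  proof -
    have "X \<inter> Z = {}" if Z: "Z \<in> Q" for Z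
    proof -
      have "X \<noteq> Z" using insert.hyps(2) Z by auto
      moreover have "X \<in> insert X Q" "Z \<in> insert X Q" using Z by auto
      ultimately show ?thesis using insert.prems(2) by blast
    qed
    then show ?thesis unfolding M_def by blast
  qed
  have fin: "finite X" "finite M" using insert unfolding M_def by auto
  let ?m = "\<lambda>(h,k). mg X h k"
  have inj: "inj_on ?m (configs d X \<times> configs d M)"
  proof (rule inj_onI, clarify)
    fix h k h' k' assume a: "h \<in> configs d X" "k \<in> configs d M" "h' \<in> configs d X" "k' \<in> configs d M"
      and e: "mg X h k = mg X h' k'"
    have "restr (mg X h k) X = restr (mg X h' k') X" using e by simp
    then have 1: "h = h'" using a by (simp add: restr_mg_same)
    have "restr (mg X h k) M = restr (mg X h' k') M" using e by simp
    then have "restr k M = restr k' M" using disj by (simp add: restr_mg_disj Int_commute)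
    moreover have "restr k M = k" "restr k' M = k'" using a by (auto simp: restr_def configs_def)
    ultimately show "h = h' \<and> k = k'" using 1 by simp
  qed
  have img: "?m ` (configs d X \<times> configs d M) = configs d (X \<union> M)"
  proof
    show "?m ` (configs d X \<times> configs d M) \<subseteq> configs d (X \<union> M)"
      by (auto simp: configs_def mg_def)
  next
    show "configs d (X \<union> M) \<subseteq> ?m ` (configs d X \<times> configs d M)"
    proof
      fix f assume f: "f \<in> configs d (X \<union> M)"
      have "f = ?m (restr f X, restr f M)" using f disj
        by (auto simp: mg_def restr_def configs_def fun_eq_iff)
      moreover have "(restr f X, restr f M) \<in> configs d X \<times> configs d M"
        using f by (auto intro: restr_configs)
      ultimately show "f \<in> ?m ` (configs d X \<times> configs d M)" by blast
    qed
  qed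
  have "(\<Sum>f\<in>configs d (\<Union>(insert X Q)). \<Prod>Z\<in>insert X Q. F Z (restr f Z))
      = (\<Sum>f\<in>configs d (X \<union> M). F X (restr f X) * (\<Prod>Z\<in>Q. F Z (restr f Z)))"
    using insert.hyps by (simp add: M_def)
  also have "\<dots> = (\<Sum>p\<in>configs d X \<times> configs d M. F X (restr (?m p) X) * (\<Prod>Z\<in>Q. F Z (restr (?m p) Z)))"
    by (subst img[symmetric], subst sum.reindex[OF inj]) (simp add: comp_def)
  also have "\<dots> = (\<Sum>p\<in>configs d X \<times> configs d M. F X (fst p) * (\<Prod>Z\<in>Q. F Z (restr (snd p) Z)))"
  proof (rule sum.cong[OF refl])
    fix p assume p: "p \<in> configs d X \<times> configs d M"
    obtain h k where hk: "p = (h,k)" by (cases p)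
    have a: "h \<in> configs d X" "k \<in> configs d M" using p hk by auto
    have "\<And>Z. Z \<in> Q \<Longrightarrow> restr (mg X h k) Z = restr k Z"
      using disj unfolding M_def by (intro restr_mg_disj) blast
    then have "(\<Prod>Z\<in>Q. F Z (restr (mg X h k) Z)) = (\<Prod>Z\<in>Q. F Z (restr k Z))"
      by (intro prod.cong) auto
    then show "F X (restr (?m p) X) * (\<Prod>Z\<in>Q. F Z (restr (?m p) Z)) =
        F X (fst p) * (\<Prod>Z\<in>Q. F Z (restr (snd p) Z))"
      using a hk by (simp add: restr_mg_same)
  qed
  also have "\<dots> = (\<Sum>(h,k)\<in>configs d X \<times> configs d M. F X h * (\<Prod>Z\<in>Q. F Z (restr k Z)))"
    by (simp add: case_prod_unfold)
  also have "\<dots> = (\<Sum>h\<in>configs d X. \<Sum>k\<in>configs d M. F X h * (\<Prod>Z\<in>Q. F Z (restr k Z)))"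
    by (rule sum.cartesian_product[symmetric])
  also have "\<dots> = (\<Sum>h\<in>configs d X. F X h) * (\<Sum>k\<in>configs d M. \<Prod>Z\<in>Q. F Z (restr k Z))"
    by (simp add: sum_product)
  also have "\<dots> = (\<Prod>Z\<in>insert X Q. \<Sum>h\<in>configs d Z. F Z h)"
    using insert by (simp add: M_def)
  finally show ?case .
qed


lemma densD:
  assumes "\<rho> \<in> dens d X"
  shows "\<And>f g. f \<notin> configs d X \<or> g \<notin> configs d X \<Longrightarrow> \<rho> f g = 0"
    and "\<And>f g. \<rho> f g = cnj (\<rho> g f)"
    and "\<And>v. Im (\<Sum>f\<in>configs d X. \<Sum>g\<in>configs d X. cnj (v f) * \<rho> f g * v g) = 0"
    and "\<And>v. 0 \<le> Re (\<Sum>f\<in>configs d X. \<Sum>g\<in>configs d X. cnj (v f) * \<rho> f g * v g)"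
    and "(\<Sum>f\<in>configs d X. \<rho> f f) = 1"
  using assms unfolding dens_def is_density_def Let_def mem_Collect_eq by blast+

lemma densI:
  assumes "\<And>f g. f \<notin> configs d X \<or> g \<notin> configs d X \<Longrightarrow> \<rho> f g = 0"
    and "\<And>f g. \<rho> f g = cnj (\<rho> g f)"
    and "\<And>v. Im (\<Sum>f\<in>configs d X. \<Sum>g\<in>configs d X. cnj (v f) * \<rho> f g * v g) = 0"
    and "\<And>v. 0 \<le> Re (\<Sum>f\<in>configs d X. \<Sum>g\<in>configs d X. cnj (v f) * \<rho> f g * v g)"
    and "(\<Sum>f\<in>configs d X. \<rho> f f) = 1"
  shows "\<rho> \<in> dens d X"
  unfolding dens_def is_density_def Let_def mem_Collect_eq using assms by blast

lemma dens_diag: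
  assumes "\<rho> \<in> dens d X" "finite X"
  shows "Im (\<rho> f f) = 0 \<and> 0 \<le> Re (\<rho> f f)"
proof (cases "f \<in> configs d X")
  case False then show ?thesis using densD(1)[OF assms(1)] by auto
next
  case True
  define v where "v = (\<lambda>g. if g = f then (1::complex) else 0)"
  have "(\<Sum>a\<in>configs d X. \<Sum>b\<in>configs d X. cnj (v a) * \<rho> a b * v b) = \<rho> f f"
  proof -
    have fin: "finite (configs d X)" using finite_configs[OF assms(2)] .
    have "(\<Sum>a\<in>configs d X. \<Sum>b\<in>configs d X. cnj (v a) * \<rho> a b * v b)
        = (\<Sum>a\<in>configs d X. \<Sum>b\<in>configs d X. if b = f then cnj (v a) * \<rho> a f else 0)"
      by (intro sum.cong refl) (auto simp: v_def)
    also have "\<dots> = (\<Sum>a\<in>configs d X. cnj (v a) * \<rho> a f)"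
      using fin True by (simp add: sum.delta)
    also have "\<dots> = (\<Sum>a\<in>configs d X. if a = f then \<rho> f f else 0)"
      by (intro sum.cong refl) (auto simp: v_def)
    also have "\<dots> = \<rho> f f" using fin True by (simp add: sum.delta)
    finally show ?thesis .
  qed
  then show ?thesis using densD(3,4)[OF assms(1), of v] by simp
qed

lemma rank1_dens:
  fixes u :: "(nat \<Rightarrow> nat) \<Rightarrow> real"
  assumes "finite X" "\<And>f. f \<notin> configs d X \<Longrightarrow> u f = 0" "(\<Sum>f\<in>configs d X. (u f)^2) = 1"
  shows "(\<lambda>f g. complex_of_real (u f * u g)) \<in> dens d X"
proof (rule densI)
  fix v :: "(nat \<Rightarrow> nat) \<Rightarrow> complex"
  define s where "s = (\<Sum>g\<in>configs d X. of_real (u g) * v g)"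
  have "(\<Sum>f\<in>configs d X. \<Sum>g\<in>configs d X. cnj (v f) * of_real (u f * u g) * v g) = cnj s * s"
    by (simp add: s_def sum_product sum_distrib_left sum_distrib_right mult_ac)
  also have "\<dots> = complex_of_real ((Re s)\<^sup>2 + (Im s)\<^sup>2)"
    using complex_mult_cnj[of s] by (simp add: mult.commute)
  finally have e: "(\<Sum>f\<in>configs d X. \<Sum>g\<in>configs d X. cnj (v f) * of_real (u f * u g) * v g) = complex_of_real ((Re s)\<^sup>2 + (Im s)\<^sup>2)" .
  show "Im (\<Sum>f\<in>configs d X. \<Sum>g\<in>configs d X. cnj (v f) * of_real (u f * u g) * v g) = 0"
    by (subst e) simp
  show "0 \<le> Re (\<Sum>f\<in>configs d X. \<Sum>g\<in>configs d X. cnj (v f) * of_real (u f * u g) * v g)"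
    by (subst e) simp
next
  show "(\<Sum>f\<in>configs d X. complex_of_real (u f * u f)) = 1"
  proof -
    have "(\<Sum>f\<in>configs d X. complex_of_real (u f * u f)) = complex_of_real (\<Sum>f\<in>configs d X. (u f)^2)"
      unfolding of_real_sum power2_eq_square by (rule refl)
    then show ?thesis using assms(3) by simp
  qed
qed (use assms in \<open>auto simp: mult.commute\<close>)

lemma dens_exists_nonzero:
  assumes "\<rho> \<in> dens d X"
  shows "\<exists>c\<in>configs d X. \<rho> c c \<noteq> 0"
proof (rule ccontr)
  assume "\<not> ?thesis"
  then have "(\<Sum>f\<in>configs d X. \<rho> f f) = 0" by simp
  then show False using densD(5)[OF assms] by simp
qed

lemma slice_psd:
  assumes "\<rho> \<in> dens d L" "finite L" "Z \<subseteq> L" "c \<in> configs d L"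
  shows "(\<Sum>h\<in>configs d Z. \<Sum>h'\<in>configs d Z. cnj (v h) * \<rho> (mg Z h c) (mg Z h' c) * v h')
     = (\<Sum>f\<in>configs d L. \<Sum>g\<in>configs d L.
          cnj ((\<lambda>f. if f \<in> (\<lambda>h. mg Z h c) ` configs d Z then v (restr f Z) else 0) f) * \<rho> f g *
          (\<lambda>f. if f \<in> (\<lambda>h. mg Z h c) ` configs d Z then v (restr f Z) else 0) g)"
    (is "?l = (\<Sum>f\<in>_. \<Sum>g\<in>_. cnj (?w f) * _ * ?w g)")
proof -
  let ?m = "\<lambda>h. mg Z h c"
  let ?M = "?m ` configs d Z"
  have fZ: "finite Z" using assms finite_subset by blast
  have fL: "finite (configs d L)" using finite_configs[OF assms(2)] .
  have MsubL: "?M \<subseteq> configs d L" using assms by (auto intro: mg_configs2)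
  have inj: "inj_on ?m (configs d Z)"
    by (rule inj_onI) (metis restr_mg_same)
  have "(\<Sum>f\<in>configs d L. \<Sum>g\<in>configs d L. cnj (?w f) * \<rho> f g * ?w g)
      = (\<Sum>f\<in>?M. \<Sum>g\<in>configs d L. cnj (?w f) * \<rho> f g * ?w g)"
    by (rule sum.mono_neutral_right[OF fL MsubL]) auto
  also have "\<dots> = (\<Sum>f\<in>?M. \<Sum>g\<in>?M. cnj (?w f) * \<rho> f g * ?w g)"
    by (rule sum.cong[OF refl], rule sum.mono_neutral_right[OF fL MsubL]) auto
  also have "\<dots> = (\<Sum>h\<in>configs d Z. \<Sum>h'\<in>configs d Z. cnj (?w (?m h)) * \<rho> (?m h) (?m h') * ?w (?m h'))"
    by (simp add: sum.reindex[OF inj])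
  also have "\<dots> = ?l"
    by (intro sum.cong refl) (auto simp: restr_mg_same)
  finally show ?thesis by simp
qed


lemma partition_facts:
  assumes "partition_on L Q"
  shows "\<Union>Q = L" "\<And>Z. Z \<in> Q \<Longrightarrow> Z \<subseteq> L" "\<And>Z. Z \<in> Q \<Longrightarrow> Z \<noteq> {}"
    "\<And>Z Z'. Z \<in> Q \<Longrightarrow> Z' \<in> Q \<Longrightarrow> Z \<noteq> Z' \<Longrightarrow> Z \<inter> Z' = {}"
  using assms by (auto simp: partition_on_def disjoint_def)

lemma char_unc:
  assumes rho: "\<rho> \<in> dens d L" and fL: "finite L" and part: "partition_on L Q"
    and c: "c \<in> configs d L" and p0: "\<rho> c c \<noteq> 0"
    and id: "\<forall>f\<in>configs d L. \<forall>g\<in>configs d L.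
        \<rho> f g * (\<rho> c c) ^ card Q = \<rho> c c * (\<Prod>Z\<in>Q. \<rho> (mg Z f c) (mg Z g c))"
  shows "\<rho> \<in> unc d L Q"
proof -
  note pf = partition_facts[OF part]
  have finQ: "finite Q" using pf(1) fL by (metis finite_UnionD)
  define p where "p = \<rho> c c"
  define t where "t Z = (\<Sum>h\<in>configs d Z. \<rho> (mg Z h c) (mg Z h c))" for Z
  define r where "r Z = Re (t Z)" for Z
  define S where "S Z h h' = (if h \<in> configs d Z \<and> h' \<in> configs d Z then \<rho> (mg Z h c) (mg Z h' c) else 0)" for Z h h'
  define \<beta> where "\<beta> Z h h' = S Z h h' / complex_of_real (r Z)" for Z h h'
  have diag: "\<And>f. Im (\<rho> f f) = 0 \<and> 0 \<le> Re (\<rho> f f)" using dens_diag[OF rho fL] by blast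
  have pRe: "0 < Re p" using diag[of c] p0 unfolding p_def by (metis complex_eqI less_eq_real_def zero_complex.simps)
  have tr: "t Z = complex_of_real (r Z) \<and> r Z > 0" if Z: "Z \<in> Q" for Z
  proof -
    have fZ: "finite (configs d Z)" using finite_configs pf(2)[OF Z] fL finite_subset by metis
    have "Im (t Z) = 0" unfolding t_def using diag by (simp add: Im_sum)
    moreover have "Re p \<le> Re (t Z)"
    proof -
      have rc: "restr c Z \<in> configs d Z" using restr_configs[OF c pf(2)[OF Z]] .
      have "Re (\<rho> (mg Z (restr c Z) c) (mg Z (restr c Z) c)) \<le> (\<Sum>h\<in>configs d Z. Re (\<rho> (mg Z h c) (mg Z h c)))"
        by (rule member_le_sum[OF rc _ fZ]) (use diag in auto)
      moreover have "mg Z (restr c Z) c = c" by (auto simp: mg_def restr_def)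
      ultimately show ?thesis by (simp add: t_def p_def Re_sum)
    qed
    ultimately show ?thesis using pRe unfolding r_def by (simp add: complex_eqI)
  qed
  have bdens: "\<beta> Z \<in> dens d Z" if Z: "Z \<in> Q" for Z
  proof (rule densI)
    fix f g show "f \<notin> configs d Z \<or> g \<notin> configs d Z \<Longrightarrow> \<beta> Z f g = 0"
      by (auto simp: \<beta>_def S_def)
  next
    fix f g
    have Sh: "S Z f g = cnj (S Z g f)"
    proof (cases "f \<in> configs d Z \<and> g \<in> configs d Z")
      case True
      then have "S Z f g = \<rho> (mg Z f c) (mg Z g c)" "S Z g f = \<rho> (mg Z g c) (mg Z f c)"
        by (auto simp: S_def)
      then show ?thesis by (simp only:) (rule densD(2)[OF rho])
    next
      case False then show ?thesis by (auto simp: S_def)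
    qed
    show "\<beta> Z f g = cnj (\<beta> Z g f)"
      unfolding \<beta>_def by (subst Sh) simp
  next
    fix v :: "(nat \<Rightarrow> nat) \<Rightarrow> complex"
    have e: "(\<Sum>f\<in>configs d Z. \<Sum>g\<in>configs d Z. cnj (v f) * \<beta> Z f g * v g)
      = (\<Sum>f\<in>configs d Z. \<Sum>g\<in>configs d Z. cnj (v f) * \<rho> (mg Z f c) (mg Z g c) * v g) / complex_of_real (r Z)"
      by (simp add: \<beta>_def S_def sum_divide_distrib)
    note sl = slice_psd[OF rho fL pf(2)[OF Z] c, of v]
    show "Im (\<Sum>f\<in>configs d Z. \<Sum>g\<in>configs d Z. cnj (v f) * \<beta> Z f g * v g) = 0"
      unfolding e Im_divide_of_real sl using densD(3)[OF rho] by simp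
    show "0 \<le> Re (\<Sum>f\<in>configs d Z. \<Sum>g\<in>configs d Z. cnj (v f) * \<beta> Z f g * v g)"
      unfolding e Re_divide_of_real sl using densD(4)[OF rho] tr[OF Z] by simp
  next
    show "(\<Sum>f\<in>configs d Z. \<beta> Z f f) = 1"
      using tr[OF Z] by (simp add: \<beta>_def S_def flip: sum_divide_distrib t_def)
  qed
  define T where "T = (\<Prod>Z\<in>Q. t Z)"
  define G where "G f g = (\<Prod>Z\<in>Q. \<beta> Z (restr f Z) (restr g Z))" for f g
  have T0: "T \<noteq> 0" unfolding T_def using tr finQ by (metis less_irrefl prod_zero_iff of_real_eq_0_iff)
  have pm0: "p ^ card Q \<noteq> 0" using p0 by (simp add: p_def)
  have rhoG: "\<rho> f g = (p * T / p ^ card Q) * G f g" if f: "f \<in> configs d L" and g: "g \<in> configs d L" for f g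
  proof -
    have "G f g = (\<Prod>Z\<in>Q. \<rho> (mg Z f c) (mg Z g c) / t Z)"
      unfolding G_def
    proof (rule prod.cong[OF refl])
      fix Z assume Z: "Z \<in> Q"
      show "\<beta> Z (restr f Z) (restr g Z) = \<rho> (mg Z f c) (mg Z g c) / t Z"
        using tr[OF Z] restr_configs[OF f pf(2)[OF Z]] restr_configs[OF g pf(2)[OF Z]]
        by (simp add: \<beta>_def S_def mg_restr)
    qed
    also have "\<dots> = (\<Prod>Z\<in>Q. \<rho> (mg Z f c) (mg Z g c)) / T"
      by (simp add: T_def prod_dividef)
    finally have "G f g * T = (\<Prod>Z\<in>Q. \<rho> (mg Z f c) (mg Z g c))" using T0 by simp
    then have "\<rho> f g * p ^ card Q = p * (G f g * T)" using id f g unfolding p_def by simp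
    then show ?thesis using pm0 by (simp add: field_simps)
  qed
  have sumG: "(\<Sum>f\<in>configs d L. G f f) = 1"
  proof -
    have "(\<Sum>f\<in>configs d L. G f f) = (\<Prod>Z\<in>Q. \<Sum>h\<in>configs d Z. \<beta> Z h h)"
      unfolding G_def using sum_prod_configs[OF finQ, of "\<lambda>Z h. \<beta> Z h h" d] pf fL finite_subset
      by (metis (no_types, lifting))
    also have "\<dots> = 1" using densD(5)[OF bdens] by simp
    finally show ?thesis .
  qed
  have lam: "p * T / p ^ card Q = 1"
  proof -
    have "1 = (\<Sum>f\<in>configs d L. \<rho> f f)" using densD(5)[OF rho] by simp
    also have "\<dots> = (\<Sum>f\<in>configs d L. (p * T / p ^ card Q) * G f f)"
      by (rule sum.cong) (auto simp: rhoG)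
    also have "\<dots> = (p * T / p ^ card Q) * (\<Sum>f\<in>configs d L. G f f)" by (rule sum_distrib_left[symmetric])
    also have "\<dots> = p * T / p ^ card Q" by (simp only: sumG mult_1_right)
    finally show ?thesis by simp
  qed
  have "\<rho> = tensor d L Q \<beta>"
  proof (intro ext)
    fix f g show "\<rho> f g = tensor d L Q \<beta> f g"
    proof (cases "f \<in> configs d L \<and> g \<in> configs d L")
      case True then show ?thesis using rhoG lam by (simp add: tensor_def G_def)
    next
      case False then show ?thesis using densD(1)[OF rho] by (auto simp: tensor_def)
    qed
  qed
  then show ?thesis unfolding unc_def using rho bdens by blast
qed


lemma tensor_eval: "f \<in> configs d L \<Longrightarrow> g \<in> configs d L \<Longrightarrow> tensor d L Q \<rho>s f g = (\<Prod>X\<in>Q. \<rho>s X (restr f X) (restr g X))"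
  by (simp add: tensor_def)

lemma fact_tensor:
  assumes part: "partition_on L Q" and fL: "finite L" and c: "c \<in> configs d L"
    and rt: "\<rho> = tensor d L Q \<rho>s" and p0: "\<rho> c c \<noteq> 0"
    and f: "f \<in> configs d L" and g: "g \<in> configs d L"
  shows "\<rho> (mg A f c) (mg A g c) * (\<rho> c c) ^ card Q = \<rho> c c * (\<Prod>Z\<in>Q. \<rho> (mg (A \<inter> Z) f c) (mg (A \<inter> Z) g c))"
proof -
  note pf = partition_facts[OF part]
  have finQ: "finite Q" using pf(1) fL by (metis finite_UnionD)
  define e where "e X = \<rho>s X (restr (mg A f c) X) (restr (mg A g c) X)" for X
  define q where "q X = \<rho>s X (restr c X) (restr c X)" for X
  have pq: "\<rho> c c = (\<Prod>X\<in>Q. q X)" using rt c by (simp add: tensor_eval q_def)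
  have q0: "q X \<noteq> 0" if "X \<in> Q" for X using p0 pq finQ that by auto
  have lhs: "\<rho> (mg A f c) (mg A g c) = (\<Prod>X\<in>Q. e X)"
    using rt mg_configs[OF f c] mg_configs[OF g c] by (simp add: tensor_eval e_def)
  have rz: "\<rho> (mg (A \<inter> Z) f c) (mg (A \<inter> Z) g c) = e Z * (\<rho> c c / q Z)" if Z: "Z \<in> Q" for Z
  proof -
    have "\<rho> (mg (A \<inter> Z) f c) (mg (A \<inter> Z) g c) = (\<Prod>X\<in>Q. if X = Z then e X else q X)"
      unfolding rt tensor_eval[OF mg_configs[OF f c] mg_configs[OF g c]]
    proof (rule prod.cong[OF refl])
      fix X assume X: "X \<in> Q"
      show "\<rho>s X (restr (mg (A \<inter> Z) f c) X) (restr (mg (A \<inter> Z) g c) X) = (if X = Z then e X else q X)"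
      proof (cases "X = Z")
        case True
        have "restr (mg (A \<inter> Z) f c) Z = restr (mg A f c) Z" "restr (mg (A \<inter> Z) g c) Z = restr (mg A g c) Z"
          by (auto simp: restr_def mg_def fun_eq_iff)
        then show ?thesis using True by (simp add: e_def)
      next
        case False
        then have "X \<inter> (A \<inter> Z) = {}" using pf(4)[OF X Z] by blast
        then show ?thesis using False by (simp add: q_def restr_mg_disj)
      qed
    qed
    also have "\<dots> = e Z * (\<Prod>X\<in>Q - {Z}. q X)"
    proof -
      have "(\<Prod>X\<in>Q. if X = Z then e X else q X) = (if Z = Z then e Z else q Z) * (\<Prod>X\<in>Q - {Z}. if X = Z then e X else q X)"
        by (rule prod.remove[OF finQ Z])
      also have "(\<Prod>X\<in>Q - {Z}. if X = Z then e X else q X) = (\<Prod>X\<in>Q - {Z}. q X)"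
        by (rule prod.cong) auto
      finally show ?thesis by simp
    qed
    also have "(\<Prod>X\<in>Q - {Z}. q X) = \<rho> c c / q Z"
      using pq prod.remove[OF finQ Z, of q] q0[OF Z] by (simp add: field_simps)
    finally show ?thesis .
  qed
  have "(\<Prod>Z\<in>Q. \<rho> (mg (A \<inter> Z) f c) (mg (A \<inter> Z) g c)) = (\<Prod>Z\<in>Q. e Z * (\<rho> c c / q Z))"
    by (rule prod.cong) (auto simp: rz)
  also have "\<dots> = (\<Prod>Z\<in>Q. e Z) * (\<rho> c c ^ card Q / \<rho> c c)"
    by (simp add: prod.distrib prod_dividef pq)
  finally show ?thesis using lhs p0 by (simp add: field_simps)
qed


definition meet :: "nat set set \<Rightarrow> nat set set \<Rightarrow> nat set set" where
  "meet Q R = {X \<inter> Y | X Y. X \<in> Q \<and> Y \<in> R \<and> X \<inter> Y \<noteq> {}}"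

lemma meet_part: "partition_on L Q \<Longrightarrow> partition_on L R \<Longrightarrow> partition_on L (meet Q R)"
proof -
  assume pQ: "partition_on L Q" and pR: "partition_on L R"
  note a = partition_facts[OF pQ] and b = partition_facts[OF pR]
  have u: "\<Union>(meet Q R) = L"
  proof
    show "\<Union>(meet Q R) \<subseteq> L" using a(2) unfolding meet_def by blast
    show "L \<subseteq> \<Union>(meet Q R)"
    proof
      fix x assume "x \<in> L"
      then obtain X Y where "X \<in> Q" "Y \<in> R" "x \<in> X" "x \<in> Y" using a(1) b(1) by blast
      then show "x \<in> \<Union>(meet Q R)" unfolding meet_def by blast
    qed
  qed
  have d: "disjoint (meet Q R)"
  proof (rule disjointI)
    fix A B assume A: "A \<in> meet Q R" and B: "B \<in> meet Q R" and ne: "A \<noteq> B"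
    obtain X Y where XY: "A = X \<inter> Y" "X \<in> Q" "Y \<in> R" using A unfolding meet_def by blast
    obtain X' Y' where XY': "B = X' \<inter> Y'" "X' \<in> Q" "Y' \<in> R" using B unfolding meet_def by blast
    have "X \<noteq> X' \<or> Y \<noteq> Y'" using ne XY XY' by blast
    then show "A \<inter> B = {}"
    proof
      assume "X \<noteq> X'" then have "X \<inter> X' = {}" using a(4) XY XY' by blast
      then show ?thesis using XY XY' by blast
    next
      assume "Y \<noteq> Y'" then have "Y \<inter> Y' = {}" using b(4) XY XY' by blast
      then show ?thesis using XY XY' by blast
    qed
  qed
  have e: "{} \<notin> meet Q R" unfolding meet_def by blast
  show ?thesis unfolding partition_on_def using u d e by blast
qed

lemma meet_ref: "refines (meet Q R) Q" "refines (meet Q R) R"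
  unfolding refines_def meet_def by auto

lemma refines_refl: "refines Q Q" unfolding refines_def by blast
lemma refines_trans: "refines Q R \<Longrightarrow> refines R S \<Longrightarrow> refines Q S" unfolding refines_def by (meson order_trans)

lemma meet_unc:
  assumes fL: "finite L" and pQ: "partition_on L Q" and pR: "partition_on L R"
    and uQ: "\<rho> \<in> unc d L Q" and uR: "\<rho> \<in> unc d L R"
  shows "\<rho> \<in> unc d L (meet Q R)"
proof -
  have rho: "\<rho> \<in> dens d L" using uQ unfolding unc_def by blast
  obtain \<rho>s where rQ: "\<rho> = tensor d L Q \<rho>s" using uQ unfolding unc_def by blast
  obtain \<sigma>s where rR: "\<rho> = tensor d L R \<sigma>s" using uR unfolding unc_def by blast
  obtain c where c: "c \<in> configs d L" and p0: "\<rho> c c \<noteq> 0" using dens_exists_nonzero[OF rho] by blast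
  note pfQ = partition_facts[OF pQ] and pfR = partition_facts[OF pR]
  have finQ: "finite Q" using pfQ(1) fL by (metis finite_UnionD)
  have finR: "finite R" using pfR(1) fL by (metis finite_UnionD)
  define p where "p = \<rho> c c"
  have key: "\<forall>f\<in>configs d L. \<forall>g\<in>configs d L.
        \<rho> f g * (\<rho> c c) ^ card (meet Q R) = \<rho> c c * (\<Prod>Z\<in>meet Q R. \<rho> (mg Z f c) (mg Z g c))"
  proof (intro ballI)
    fix f g assume f: "f \<in> configs d L" and g: "g \<in> configs d L"
    define D where "D A = \<rho> (mg A f c) (mg A g c)" for A
    have DL: "D L = \<rho> f g" using mg_full[OF f c] mg_full[OF g c] by (simp add: D_def)
    have D0: "D {} = p" by (simp add: D_def p_def mg_def)
    have e1: "D L * p ^ card Q = p * (\<Prod>X\<in>Q. D X)"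
    proof -
      have ft: "\<rho> (mg L f c) (mg L g c) * (\<rho> c c) ^ card Q = \<rho> c c * (\<Prod>Z\<in>Q. \<rho> (mg (L \<inter> Z) f c) (mg (L \<inter> Z) g c))"
        by (rule fact_tensor[where \<rho>=\<rho>, OF pQ fL c rQ p0 f g])
      have "(\<Prod>Z\<in>Q. \<rho> (mg (L \<inter> Z) f c) (mg (L \<inter> Z) g c)) = (\<Prod>X\<in>Q. D X)"
        by (rule prod.cong[OF refl]) (simp add: D_def Int_absorb1 pfQ(2))
      then show ?thesis using ft by (simp add: D_def p_def)
    qed
    have e2: "D X * p ^ card R = p * (\<Prod>Y\<in>R. D (X \<inter> Y))" for X
    proof -
      have ft: "\<rho> (mg X f c) (mg X g c) * (\<rho> c c) ^ card R = \<rho> c c * (\<Prod>Z\<in>R. \<rho> (mg (X \<inter> Z) f c) (mg (X \<inter> Z) g c))"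
        by (rule fact_tensor[where \<rho>=\<rho>, OF pR fL c rR p0 f g])
      then show ?thesis by (simp add: D_def p_def)
    qed
    have "D L * p ^ card Q * p ^ (card Q * card R) = p * (\<Prod>X\<in>Q. D X * p ^ card R)"
    proof -
      have pk: "p ^ (card Q * card R) = (\<Prod>X\<in>Q. p ^ card R)"
        by (simp add: power_mult[symmetric] mult.commute)
      have "D L * p ^ card Q * p ^ (card Q * card R) = p * (\<Prod>X\<in>Q. D X) * (\<Prod>X\<in>Q. p ^ card R)"
        by (simp only: e1 pk)
      also have "\<dots> = p * (\<Prod>X\<in>Q. D X * p ^ card R)"
        by (simp only: prod.distrib mult.assoc)
      finally show ?thesis .
    qed
    also have "\<dots> = p * (\<Prod>X\<in>Q. p * (\<Prod>Y\<in>R. D (X \<inter> Y)))" by (simp add: e2)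
    also have "\<dots> = p * p ^ card Q * (\<Prod>X\<in>Q. \<Prod>Y\<in>R. D (X \<inter> Y))" by (simp add: prod.distrib)
    finally have e3: "D L * p ^ (card Q * card R) = p * (\<Prod>X\<in>Q. \<Prod>Y\<in>R. D (X \<inter> Y))"
      using p0 unfolding p_def by simp
    define E where "E = {(X,Y) \<in> Q \<times> R. X \<inter> Y \<noteq> {}}"
    define N where "N = {(X,Y) \<in> Q \<times> R. X \<inter> Y = {}}"
    have QR: "Q \<times> R = E \<union> N" "E \<inter> N = {}" unfolding E_def N_def by auto
    have finE: "finite E" "finite N" using finQ finR unfolding E_def N_def by (auto intro: finite_subset[of _ "Q \<times> R"])
    have inj: "inj_on (\<lambda>(X,Y). X \<inter> Y) E"
    proof (rule inj_onI, clarify)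
      fix X Y X' Y' assume a: "(X,Y) \<in> E" "(X',Y') \<in> E" "X \<inter> Y = X' \<inter> Y'"
      then have "X \<inter> X' \<noteq> {}" "Y \<inter> Y' \<noteq> {}" unfolding E_def by auto
      then show "X = X' \<and> Y = Y'" using a pfQ(4) pfR(4) unfolding E_def by blast
    qed
    have img: "(\<lambda>(X,Y). X \<inter> Y) ` E = meet Q R" unfolding E_def meet_def by auto
    have "(\<Prod>X\<in>Q. \<Prod>Y\<in>R. D (X \<inter> Y)) = (\<Prod>(X,Y)\<in>E \<union> N. D (X \<inter> Y))"
      by (simp add: prod.cartesian_product QR(1)[symmetric])
    also have "\<dots> = (\<Prod>(X,Y)\<in>E. D (X \<inter> Y)) * (\<Prod>(X,Y)\<in>N. D (X \<inter> Y))"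
      by (rule prod.union_disjoint) (use finE QR in auto)
    also have "(\<Prod>(X,Y)\<in>N. D (X \<inter> Y)) = p ^ card N"
      by (subst prod.cong[OF refl, where h = "\<lambda>_. p"]) (auto simp: N_def D0)
    also have "(\<Prod>(X,Y)\<in>E. D (X \<inter> Y)) = (\<Prod>Z\<in>meet Q R. D Z)"
      unfolding img[symmetric] by (subst prod.reindex[OF inj]) (simp add: case_prod_unfold comp_def)
    finally have e4: "(\<Prod>X\<in>Q. \<Prod>Y\<in>R. D (X \<inter> Y)) = (\<Prod>Z\<in>meet Q R. D Z) * p ^ card N" .
    have cc: "card Q * card R = card (meet Q R) + card N"
      using card_Un_disjoint[OF finE QR(2)] card_cartesian_product[of Q R] QR(1)
        card_image[OF inj] img by simp
    have "D L * p ^ card (meet Q R) * p ^ card N = p * (\<Prod>Z\<in>meet Q R. D Z) * p ^ card N"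
      using e3 e4 cc by (simp add: power_add mult_ac)
    then have "D L * p ^ card (meet Q R) = p * (\<Prod>Z\<in>meet Q R. D Z)"
      using p0 unfolding p_def by simp
    then show "\<rho> f g * \<rho> c c ^ card (meet Q R) = \<rho> c c * (\<Prod>Z\<in>meet Q R. \<rho> (mg Z f c) (mg Z g c))"
      using mg_full[OF f c] mg_full[OF g c] by (simp add: D_def p_def)
  qed
  show ?thesis by (rule char_unc[where \<rho>=\<rho>, OF rho fL meet_part[OF pQ pR] c p0 key])
qed


definition zc :: "nat \<Rightarrow> nat" where "zc = (\<lambda>i. 0)"
definition ec :: "nat set \<Rightarrow> nat \<Rightarrow> nat" where "ec X = (\<lambda>i. if i \<in> X then 1 else 0)"
definition amp :: "nat set \<Rightarrow> (nat \<Rightarrow> nat) \<Rightarrow> real" where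
  "amp X h = (if h = zc \<or> h = ec X then 1 / sqrt 2 else 0)"

lemma zc_configs: "\<forall>i\<in>X. 1 < d i \<Longrightarrow> zc \<in> configs d X" by (auto simp: zc_def configs_def)
lemma ec_configs: "\<forall>i\<in>X. 1 < d i \<Longrightarrow> ec X \<in> configs d X" by (simp add: ec_def configs_def)
lemma zc_ec: "X \<noteq> {} \<Longrightarrow> zc \<noteq> ec X" by (auto simp: zc_def ec_def fun_eq_iff)
lemma restr_zc: "restr zc X = zc" by (simp add: zc_def restr_def)
lemma restr_ec: "restr (ec X) Y = ec (X \<inter> Y)" by (auto simp: ec_def restr_def fun_eq_iff)

lemma amp_sq:
  assumes "finite X" "X \<noteq> {}" "\<forall>i\<in>X. 1 < d i"
  shows "(\<Sum>h\<in>configs d X. (amp X h)^2) = 1"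
proof -
  have "(\<Sum>h\<in>configs d X. (amp X h)^2) = (\<Sum>h\<in>configs d X. if h \<in> {zc, ec X} then 1/2 else 0)"
    by (rule sum.cong) (auto simp: amp_def power_divide)
  also have "\<dots> = (\<Sum>h\<in>{h\<in>configs d X. h \<in> {zc, ec X}}. (1::real)/2)"
    by (rule sum.inter_filter[symmetric]) (simp add: finite_configs assms(1))
  also have "{h\<in>configs d X. h \<in> {zc, ec X}} = {zc, ec X}"
    using zc_configs[OF assms(3)] ec_configs[OF assms(3)] by auto
  finally show ?thesis using zc_ec[OF assms(2)] by simp
qed

lemma construct:
  assumes fL: "finite L" and dL: "\<forall>i\<in>L. 1 < d i" and part: "partition_on L Q"
  shows "\<exists>\<rho>. \<rho> \<in> unc d L Q \<and> (\<forall>R. partition_on L R \<longrightarrow> \<rho> \<in> unc d L R \<longrightarrow> refines Q R)"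
proof -
  note pf = partition_facts[OF part]
  have finQ: "finite Q" using pf(1) fL by (metis finite_UnionD)
  have finX: "finite X" "X \<noteq> {}" "\<forall>i\<in>X. 1 < d i" if "X \<in> Q" for X
  proof -
    show "finite X" by (rule finite_subset[OF pf(2)[OF that] fL])
    show "X \<noteq> {}" by (rule pf(3)[OF that])
    show "\<forall>i\<in>X. 1 < d i" using pf(2)[OF that] dL by auto
  qed
  define u where "u f = (if f \<in> configs d L then \<Prod>X\<in>Q. amp X (restr f X) else 0)" for f
  define uX where "uX X h = (if h \<in> configs d X then amp X h else 0)" for X h
  define \<rho> where "\<rho> = (\<lambda>f g. complex_of_real (u f * u g))"
  define \<rho>s where "\<rho>s X = (\<lambda>h h'. complex_of_real (uX X h * uX X h'))" for X
  have d1: "\<rho>s X \<in> dens d X" if X: "X \<in> Q" for X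
    unfolding \<rho>s_def
  proof (rule rank1_dens)
    show "(\<Sum>f\<in>configs d X. (uX X f)\<^sup>2) = 1" using amp_sq[OF finX[OF X]] by (simp add: uX_def)
  qed (use finX[OF X] in \<open>auto simp: uX_def\<close>)
  have d2: "\<rho> \<in> dens d L"
    unfolding \<rho>_def
  proof (rule rank1_dens[OF fL])
    have "(\<Sum>f\<in>configs d L. (u f)\<^sup>2) = (\<Sum>f\<in>configs d (\<Union>Q). \<Prod>X\<in>Q. (amp X (restr f X))^2)"
      by (simp add: u_def pf(1) prod_power_distrib)
    also have "\<dots> = (\<Prod>X\<in>Q. \<Sum>h\<in>configs d X. (amp X h)^2)"
      using finX(1) pf(4) by (intro sum_prod_configs[OF finQ]) auto
    also have "\<dots> = 1" using amp_sq finX by simp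
    finally show "(\<Sum>f\<in>configs d L. (u f)\<^sup>2) = 1" .
  qed (simp add: u_def)
  have tens: "\<rho> = tensor d L Q \<rho>s"
  proof (intro ext)
    fix f g show "\<rho> f g = tensor d L Q \<rho>s f g"
    proof (cases "f \<in> configs d L \<and> g \<in> configs d L")
      case True
      then have "\<forall>X\<in>Q. restr f X \<in> configs d X \<and> restr g X \<in> configs d X"
        using restr_configs pf(2) by blast
      then show ?thesis using True
        by (simp add: \<rho>_def \<rho>s_def tensor_def u_def uX_def prod.distrib flip: of_real_prod cong: prod.cong)
    qed (auto simp: \<rho>_def u_def tensor_def)
  qed
  have unc: "\<rho> \<in> unc d L Q" unfolding unc_def using d1 d2 tens by blast
  have "refines Q R" if pR: "partition_on L R" and uR: "\<rho> \<in> unc d L R" for R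
  proof (rule ccontr)
    assume "\<not> refines Q R"
    then obtain X where X: "X \<in> Q" and nX: "\<forall>Y\<in>R. \<not> X \<subseteq> Y" unfolding refines_def by blast
    note pfR = partition_facts[OF pR]
    obtain i where i: "i \<in> X" using finX(2)[OF X] by blast
    then obtain Y1 where Y1: "Y1 \<in> R" "i \<in> Y1" using pf(2)[OF X] pfR(1) by blast
    then obtain j where j: "j \<in> X" "j \<notin> Y1" using nX by blast
    obtain \<sigma>s where rR: "\<rho> = tensor d L R \<sigma>s" using uR unfolding unc_def by blast
    define f1 where "f1 = ec X"
    define h where "h = mg Y1 f1 zc"
    define h' where "h' = mg Y1 zc f1"
    have XL: "X \<subseteq> L" using pf(2)[OF X] .
    have f1c: "f1 \<in> configs d L" using XL dL by (auto simp: f1_def ec_def configs_def)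
    have zcL: "zc \<in> configs d L" by (rule zc_configs[OF dL])
    have hc: "h \<in> configs d L" "h' \<in> configs d L" unfolding h_def h'_def using mg_configs f1c zcL by blast+
    have rh: "restr h Y = (if Y = Y1 then restr f1 Y else restr zc Y)"
      "restr h' Y = (if Y = Y1 then restr zc Y else restr f1 Y)" if Y: "Y \<in> R" for Y
    proof -
      show "restr h Y = (if Y = Y1 then restr f1 Y else restr zc Y)"
        using pfR(4)[OF Y Y1(1)] unfolding h_def by (auto simp: restr_mg_sub restr_mg_disj)
      show "restr h' Y = (if Y = Y1 then restr zc Y else restr f1 Y)"
        using pfR(4)[OF Y Y1(1)] unfolding h'_def by (auto simp: restr_mg_sub restr_mg_disj)
    qed
    have swap: "\<rho> h h * \<rho> h' h' = \<rho> f1 f1 * \<rho> zc zc"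
    proof -
      have "\<rho> h h * \<rho> h' h' = (\<Prod>Y\<in>R. \<sigma>s Y (restr h Y) (restr h Y) * \<sigma>s Y (restr h' Y) (restr h' Y))"
        unfolding rR tensor_eval[OF hc(1) hc(1)] tensor_eval[OF hc(2) hc(2)] by (simp add: prod.distrib)
      also have "\<dots> = (\<Prod>Y\<in>R. \<sigma>s Y (restr f1 Y) (restr f1 Y) * \<sigma>s Y (restr zc Y) (restr zc Y))"
        by (rule prod.cong[OF refl]) (simp add: rh)
      also have "\<dots> = \<rho> f1 f1 * \<rho> zc zc"
        unfolding rR tensor_eval[OF f1c f1c] tensor_eval[OF zcL zcL] by (simp add: prod.distrib)
      finally show ?thesis .
    qed
    have "u f1 \<noteq> 0"
    proof -
      have "amp X' (restr f1 X') \<noteq> 0" if X': "X' \<in> Q" for X'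
      proof (cases "X' = X")
        case True then show ?thesis by (simp add: amp_def f1_def restr_ec)
      next
        case False
        then have "X \<inter> X' = {}" using pf(4)[OF X X'] by blast
        then have "restr f1 X' = zc" by (auto simp: f1_def restr_def ec_def zc_def fun_eq_iff)
        then show ?thesis by (simp add: amp_def)
      qed
      then show ?thesis using f1c finQ by (simp add: u_def)
    qed
    moreover have "u zc \<noteq> 0" using zcL finQ by (simp add: u_def restr_zc amp_def)
    moreover have "u h = 0"
    proof -
      have "restr h X = ec (X \<inter> Y1)" unfolding h_def f1_def
        by (auto simp: restr_def mg_def ec_def zc_def fun_eq_iff)
      moreover have "ec (X \<inter> Y1) \<noteq> zc" using i Y1 by (auto simp: ec_def zc_def fun_eq_iff)
      moreover have "ec (X \<inter> Y1) \<noteq> ec X" using j by (auto simp: ec_def fun_eq_iff)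
      ultimately have "amp X (restr h X) = 0" by (simp add: amp_def)
      then show ?thesis using hc X finQ by (auto simp: u_def)
    qed
    ultimately show False using swap by (simp add: \<rho>_def)
  qed
  then show ?thesis using unc by blast
qed


lemma min_elem:
  assumes "finite F" "F \<noteq> {}" "F \<subseteq> U" "\<forall>a\<in>U. \<forall>b\<in>U. meet a b \<in> U"
  shows "\<exists>m\<in>U. \<forall>\<eta>\<in>F. refines m \<eta>"
  using assms
proof (induction F rule: finite_ne_induct)
  case (singleton x) then show ?case using refines_refl by blast
next
  case (insert x F)
  then obtain m where m: "m \<in> U" "\<forall>\<eta>\<in>F. refines m \<eta>" by blast
  have "meet m x \<in> U" using insert m by blast
  moreover have "\<forall>\<eta>\<in>insert x F. refines (meet m x) \<eta>"
    using m meet_ref refines_trans by blast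
  ultimately show ?case by blast
qed

theorem proposition3:
  fixes n :: nat and d :: "nat \<Rightarrow> nat" and \<Xi> :: "nat set set set set"
  assumes "n \<ge> 1"
    and "\<forall>i\<in>{1..n}. 1 < d i"
    and "\<Xi> \<in> PIII {1..n}"
  shows "Cunc d {1..n} \<Xi> \<noteq> {} \<longleftrightarrow> (\<exists>\<xi>\<in>PI {1..n}. \<Xi> = upset {1..n} (downset {1..n} \<xi>))"
proof
  define L where "L = {1..n}"
  have fL: "finite L" unfolding L_def by simp
  have dL: "\<forall>i\<in>L. 1 < d i" using assms(2) unfolding L_def .
  have Xi: "\<Xi> \<subseteq> PII L" "\<Xi> \<noteq> {}" using assms(3) unfolding PIII_def L_def by auto
  {
    assume "Cunc d {1..n} \<Xi> \<noteq> {}"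
    then obtain \<rho> where r: "\<rho> \<in> Cunc d L \<Xi>" unfolding L_def by blast
    define U where "U = {\<eta> \<in> PI L. \<rho> \<in> unc d L \<eta>}"
    have i: "\<exists>\<eta>\<in>S. \<eta> \<in> U" if "S \<in> \<Xi>" for S
    proof -
      from r have "\<rho> \<in> (\<Inter>\<xi>\<in>\<Xi>. uncS d L \<xi>)" unfolding Cunc_def by (rule IntD2)
      then have "\<rho> \<in> uncS d L S" using that by (rule INT_D)
      then obtain \<eta> where e: "\<eta> \<in> S" "\<rho> \<in> unc d L \<eta>" unfolding uncS_def by (rule UN_E)
      have "S \<subseteq> PI L" using Xi(1) that unfolding PII_def by auto
      then show ?thesis using e unfolding U_def by auto
    qed
    have ii: "\<not> (\<exists>\<eta>\<in>S. \<eta> \<in> U)" if "S \<in> PII L" "S \<notin> \<Xi>" for S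
    proof
      assume "\<exists>\<eta>\<in>S. \<eta> \<in> U"
      then obtain \<eta> where e: "\<eta> \<in> S" "\<rho> \<in> unc d L \<eta>" unfolding U_def by auto
      then have A: "\<rho> \<in> uncS d L S" unfolding uncS_def by (rule UN_I)
      from r have B: "\<rho> \<in> (\<Inter>\<xi>'\<in>PII L - \<Xi>. dens d L - uncS d L \<xi>')" unfolding Cunc_def by (rule IntD1)
      have C: "\<rho> \<in> dens d L - uncS d L S" by (rule INT_D[OF B]) (simp add: that)
      show False using DiffD2[OF C A] .
    qed
    have finU: "finite U"
    proof -
      have "U \<subseteq> Pow (Pow L)"
      proof
        fix \<eta> assume "\<eta> \<in> U"
        then have "partition_on L \<eta>" unfolding U_def PI_def by simp
        then show "\<eta> \<in> Pow (Pow L)" using partition_facts(2) by blast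
      qed
      moreover have "finite (Pow (Pow L))" using fL by simp
      ultimately show ?thesis by (rule finite_subset)
    qed
    have neU: "U \<noteq> {}" using i Xi(2) by blast
    have mc: "\<forall>a\<in>U. \<forall>b\<in>U. meet a b \<in> U"
    proof (intro ballI)
      fix a b assume a: "a \<in> U" and b: "b \<in> U"
      have pa: "partition_on L a" and ua: "\<rho> \<in> unc d L a" using a unfolding U_def PI_def by auto
      have pb: "partition_on L b" and ub: "\<rho> \<in> unc d L b" using b unfolding U_def PI_def by auto
      show "meet a b \<in> U" unfolding U_def PI_def
        using meet_unc[OF fL pa pb ua ub] meet_part[OF pa pb] by simp
    qed
    obtain m where m: "m \<in> U" "\<forall>\<eta>\<in>U. refines m \<eta>"
      using min_elem[OF finU neU subset_refl mc] by blast
    have mPI: "m \<in> PI L" using m unfolding U_def by blast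
    have "\<Xi> = upset L (downset L m)"
    proof
      show "\<Xi> \<subseteq> upset L (downset L m)"
      proof
        fix S assume S: "S \<in> \<Xi>"
        then have SP: "S \<in> PII L" using Xi by blast
        obtain \<eta> where "\<eta> \<in> S" "\<eta> \<in> U" using i[OF S] by blast
        then have "m \<in> S" using SP m mPI unfolding PII_def by blast
        then have "downset L m \<subseteq> S" using SP unfolding PII_def downset_def by blast
        then show "S \<in> upset L (downset L m)" using SP unfolding upset_def by blast
      qed
    next
      show "upset L (downset L m) \<subseteq> \<Xi>"
      proof
        fix S assume S: "S \<in> upset L (downset L m)"
        then have "m \<in> S" "S \<in> PII L" using mPI refines_refl unfolding upset_def downset_def by blast+
        then show "S \<in> \<Xi>" using ii m by blast
      qed
    qed
    then show "\<exists>\<xi>\<in>PI {1..n}. \<Xi> = upset {1..n} (downset {1..n} \<xi>)" using mPI unfolding L_def by blast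
  }
  {
    assume "\<exists>\<xi>\<in>PI {1..n}. \<Xi> = upset {1..n} (downset {1..n} \<xi>)"
    then obtain \<xi> where x: "\<xi> \<in> PI L" "\<Xi> = upset L (downset L \<xi>)" unfolding L_def by blast
    obtain \<rho> where r: "\<rho> \<in> unc d L \<xi>" "\<forall>R. partition_on L R \<longrightarrow> \<rho> \<in> unc d L R \<longrightarrow> refines \<xi> R"
      using construct[OF fL dL] x(1) unfolding PI_def by blast
    have dens: "\<rho> \<in> dens d L" using r unfolding unc_def by blast
    have "\<rho> \<in> Cunc d L \<Xi>"
      unfolding Cunc_def
    proof
      show "\<rho> \<in> (\<Inter>\<xi>'\<in>PII L - \<Xi>. dens d L - uncS d L \<xi>')"
      proof
        fix S assume S: "S \<in> PII L - \<Xi>"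
        have "\<rho> \<notin> uncS d L S"
        proof
          assume "\<rho> \<in> uncS d L S"
          then obtain \<eta> where e: "\<eta> \<in> S" "\<rho> \<in> unc d L \<eta>" unfolding uncS_def by blast
          have "\<eta> \<in> PI L" using e S unfolding PII_def by blast
          then have "refines \<xi> \<eta>" using r e unfolding PI_def by blast
          then have "\<xi> \<in> S" using S e x(1) unfolding PII_def by blast
          then have "downset L \<xi> \<subseteq> S" using S refines_trans unfolding PII_def downset_def by blast
          then have "S \<in> \<Xi>" using S x(2) unfolding upset_def by blast
          then show False using S by blast
        qed
        then show "\<rho> \<in> dens d L - uncS d L S" using dens by blast
      qed
    next
      show "\<rho> \<in> (\<Inter>S\<in>\<Xi>. uncS d L S)"
      proof
        fix S assume "S \<in> \<Xi>"
        then have "\<xi> \<in> S" using x refines_refl unfolding upset_def downset_def by blast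
        then show "\<rho> \<in> uncS d L S" using r unfolding uncS_def by blast
      qed
    qed
    then show "Cunc d {1..n} \<Xi> \<noteq> {}" unfolding L_def by blast
  }
qed

end
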